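(* The double Zarankiewicz number satisfies $z_2(m,2)=m+1$ for all $m\ge 2$, $z_2(2,n)=n+1$ for all $n\ge2$, $z_2(3,3)=6$, and $z_2(4,3)\ge 8> z(4,3)$.
   Context: The Zarankiewicz number $z(m,n)$ is the maximum number of edges of a bipartite graph with parts $[m]=\{1,\dots,m\}$ and $[n]$ containing no 4-cycle (equivalently, the maximum size of a set of cells of the $m\times n$ grid containing no four cells $(i,j),(i,l),(k,j),(k,l)$ with $i\ne k$, $j\ne l$). Double Zarankiewicz number: consider configurations $G=([m],[n],E_1\cup E_2)$ where $E_1\subseteq[m]\times[n]$ is a set of 1-edges (cells) and $E_2$ is a set of 2-edges $(i,j;k,l)$ with $i,k\in[m]$, $j,l\in[n]$, $i\ne k$, $j\ne l$; the cells $(i,j)$ and $(k,l)$ are the two halves of this 2-edge. Simplicity condition: the halves of all 2-edges are pairwise distinct cells and none of them belongs to $E_1$. A cell is occupied if it lies in $E_1$ or is a half of some 2-edge. $G$ contains a generalized $C_4$-cycle if (1) there are four 1-edges $(i,j),(i,l),(k,j),(k,l)\in E_1$ with $i\ne k$, $j\ne l$; or (2) there is a 2-edge $(i,j;k,l)\in E_2$ whose two opposite cells $(i,l)$ and $(k,j)$ are both occupied; or (3) there are a 2-edge $(i,j;p,q)\in E_2$ and a cell $(k,l)$ such that the five cells $(k,l),(k,j),(k,q),(i,l),(p,l)$ are pairwise distinct and all occupied. $z_2(m,n)$ is the maximum of $|E_1|+|E_2|$ over all such $G$ satisfying the simplicity condition and containing no generalized $C_4$-cycle. *)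

theory Defs
  imports Main
begin

type_synonym cell = "nat \<times> nat"
type_synonym twoedge = "cell \<times> cell"

definition grid :: "nat \<Rightarrow> nat \<Rightarrow> cell set" where
  "grid m n = {1..m} \<times> {1..n}"

definition has_C4 :: "cell set \<Rightarrow> bool" where
  "has_C4 S \<longleftrightarrow> (\<exists>i j k l. i \<noteq> k \<and> j \<noteq> l \<and>
      (i,j) \<in> S \<and> (i,l) \<in> S \<and> (k,j) \<in> S \<and> (k,l) \<in> S)"

definition zaran :: "nat \<Rightarrow> nat \<Rightarrow> nat" where
  "zaran m n = Max {card E | E. E \<subseteq> grid m n \<and> \<not> has_C4 E}"

definition twoedges_ok :: "nat \<Rightarrow> nat \<Rightarrow> twoedge set \<Rightarrow> bool" where
  "twoedges_ok m n E2 \<longleftrightarrow> (\<forall>((i,j),(k,l)) \<in> E2.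
      (i,j) \<in> grid m n \<and> (k,l) \<in> grid m n \<and> i \<noteq> k \<and> j \<noteq> l)"

definition halves :: "twoedge set \<Rightarrow> cell set" where
  "halves E2 = fst ` E2 \<union> snd ` E2"

definition simple_conf :: "cell set \<Rightarrow> twoedge set \<Rightarrow> bool" where
  "simple_conf E1 E2 \<longleftrightarrow>
     (\<forall>e\<in>E2. \<forall>e'\<in>E2. e \<noteq> e' \<longrightarrow>
        {fst e, snd e} \<inter> {fst e', snd e'} = {}) \<and>
     (\<forall>e\<in>E2. fst e \<noteq> snd e) \<and>
     halves E2 \<inter> E1 = {}"

definition occupied :: "cell set \<Rightarrow> twoedge set \<Rightarrow> cell \<Rightarrow> bool" where
  "occupied E1 E2 c \<longleftrightarrow> c \<in> E1 \<or> c \<in> halves E2"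

definition has_gen_C4 :: "cell set \<Rightarrow> twoedge set \<Rightarrow> bool" where
  "has_gen_C4 E1 E2 \<longleftrightarrow>
     has_C4 E1 \<or>
     (\<exists>i j k l. ((i,j),(k,l)) \<in> E2 \<and> occupied E1 E2 (i,l) \<and> occupied E1 E2 (k,j)) \<or>
     (\<exists>i j p q k l. ((i,j),(p,q)) \<in> E2 \<and>
        distinct [(k,l),(k,j),(k,q),(i,l),(p,l)] \<and>
        occupied E1 E2 (k,l) \<and> occupied E1 E2 (k,j) \<and> occupied E1 E2 (k,q) \<and>
        occupied E1 E2 (i,l) \<and> occupied E1 E2 (p,l))"

definition z2 :: "nat \<Rightarrow> nat \<Rightarrow> nat" where
  "z2 m n = Max {card E1 + card E2 | E1 E2.
      E1 \<subseteq> grid m n \<and> twoedges_ok m n E2 \<and> simple_conf E1 E2 \<and> \<not> has_gen_C4 E1 E2}"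

end

theory Submission
  imports Defs
begin

definition valid :: "nat \<Rightarrow> nat \<Rightarrow> cell set \<Rightarrow> twoedge set \<Rightarrow> bool" where
  "valid m n E1 E2 \<longleftrightarrow> E1 \<subseteq> grid m n \<and> twoedges_ok m n E2 \<and> simple_conf E1 E2 \<and> \<not> has_gen_C4 E1 E2"

lemma finite_grid[simp]: "finite (grid m n)"
  by (simp add: grid_def)

lemma twoedges_sub: "twoedges_ok m n E2 \<Longrightarrow> E2 \<subseteq> grid m n \<times> grid m n"
  unfolding twoedges_ok_def by fastforce

lemma z2_set_finite: "finite {card E1 + card E2 | E1 E2.
      E1 \<subseteq> grid m n \<and> twoedges_ok m n E2 \<and> simple_conf E1 E2 \<and> \<not> has_gen_C4 E1 E2}"
proof -
  have "{card E1 + card E2 | E1 E2.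
      E1 \<subseteq> grid m n \<and> twoedges_ok m n E2 \<and> simple_conf E1 E2 \<and> \<not> has_gen_C4 E1 E2}
     \<subseteq> (\<lambda>(E1,E2). card E1 + card E2) ` (Pow (grid m n) \<times> Pow (grid m n \<times> grid m n))"
    using twoedges_sub by fastforce
  then show ?thesis by (rule finite_subset) simp
qed

lemma valid_empty: "valid m n {} {}"
  by (simp add: valid_def twoedges_ok_def simple_conf_def has_gen_C4_def has_C4_def)

lemma z2_ge: "valid m n E1 E2 \<Longrightarrow> card E1 + card E2 \<le> z2 m n"
  unfolding z2_def valid_def
  by (rule Max_ge[OF z2_set_finite]) blast

lemma z2_le: "(\<And>E1 E2. valid m n E1 E2 \<Longrightarrow> card E1 + card E2 \<le> v) \<Longrightarrow> z2 m n \<le> v"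
  unfolding z2_def
  apply (rule Max.boundedI[OF z2_set_finite])
  using valid_empty[of m n] unfolding valid_def apply blast
  unfolding valid_def by blast

lemma ne_imp_nonempty: "x \<in> A \<Longrightarrow> A \<noteq> {}" by blast

lemma zaran_le: "(\<And>E. E \<subseteq> grid m n \<Longrightarrow> \<not> has_C4 E \<Longrightarrow> card E \<le> v) \<Longrightarrow> zaran m n \<le> v"
  unfolding zaran_def
  apply (rule Max.boundedI)
  apply (rule finite_subset[of _ "card ` Pow (grid m n)"]) apply blast apply simp
  apply (rule ne_imp_nonempty[of 0], rule CollectI, rule exI[of _ "{}"], simp add: has_C4_def)
  by blast

lemma halves_card:
  assumes "simple_conf E1 E2" "finite E2"
  shows "card (halves E2) = 2 * card E2"
proof -
  have D: "\<And>e e'. e \<in> E2 \<Longrightarrow> e' \<in> E2 \<Longrightarrow> e \<noteq> e' \<Longrightarrow> {fst e, snd e} \<inter> {fst e', snd e'} = {}"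
    using assms(1) unfolding simple_conf_def by blast
  have N: "\<And>e. e \<in> E2 \<Longrightarrow> fst e \<noteq> snd e"
    using assms(1) unfolding simple_conf_def by blast
  have i1: "inj_on fst E2" unfolding inj_on_def
  proof (intro ballI impI)
    fix x y assume "x \<in> E2" "y \<in> E2" "fst x = fst y"
    then show "x = y" using D[of x y] by auto
  qed
  have i2: "inj_on snd E2" unfolding inj_on_def
  proof (intro ballI impI)
    fix x y assume "x \<in> E2" "y \<in> E2" "snd x = snd y"
    then show "x = y" using D[of x y] by auto
  qed
  have d: "fst ` E2 \<inter> snd ` E2 = {}"
  proof (rule ccontr)
    assume "fst ` E2 \<inter> snd ` E2 \<noteq> {}"
    then obtain x y where "x \<in> E2" "y \<in> E2" "fst x = snd y" by blast
    then show False using D[of x y] N[of x] by (cases "x = y") auto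
  qed
  show ?thesis unfolding halves_def
    using card_Un_disjoint[OF finite_imageI[OF assms(2)] finite_imageI[OF assms(2)] d]
      card_image[OF i1] card_image[OF i2] by simp
qed

lemma occ_card:
  assumes "valid m n E1 E2"
  shows "card (E1 \<union> halves E2) = card E1 + 2 * card E2"
proof -
  have f1: "finite E1" using assms unfolding valid_def using finite_subset[OF _ finite_grid] by blast
  have "E2 \<subseteq> grid m n \<times> grid m n" using assms twoedges_sub unfolding valid_def by blast
  then have f2: "finite E2" using finite_subset by (metis finite_SigmaI finite_grid)
  have d: "E1 \<inter> halves E2 = {}" using assms unfolding valid_def simple_conf_def by blast
  have "card (halves E2) = 2 * card E2" using halves_card[OF _ f2] assms unfolding valid_def by blast
  moreover have "finite (halves E2)" using f2 unfolding halves_def by simp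
  ultimately show ?thesis using card_Un_disjoint[OF f1 _ d] by simp
qed

lemma occ_sub: "valid m n E1 E2 \<Longrightarrow> E1 \<union> halves E2 \<subseteq> grid m n"
proof -
  assume v: "valid m n E1 E2"
  then have "E2 \<subseteq> grid m n \<times> grid m n" using twoedges_sub unfolding valid_def by blast
  then have "halves E2 \<subseteq> grid m n" unfolding halves_def by auto
  then show ?thesis using v unfolding valid_def by blast
qed



lemma occ_iff: "occupied E1 E2 c \<longleftrightarrow> c \<in> E1 \<union> halves E2"
  unfolding occupied_def by blast

lemma col2_upper:
  assumes v: "valid m 2 E1 E2"
  shows "card E1 + card E2 \<le> m + 1"
proof -
  define Oc where "Oc = E1 \<union> halves E2"
  have Osub: "Oc \<subseteq> grid m 2" using occ_sub[OF v] Oc_def by simp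
  have cardO: "card Oc = card E1 + 2 * card E2" using occ_card[OF v] Oc_def by simp
  define F where "F = {r \<in> {1..m}. (r,1) \<in> Oc \<and> (r,2) \<in> Oc}"
  have "Oc \<subseteq> (\<lambda>r. (r, if (r,1) \<in> Oc then 1 else (2::nat))) ` {1..m} \<union> (\<lambda>r. (r,2::nat)) ` F"
  proof
    fix c assume c: "c \<in> Oc"
    obtain r k where rk: "c = (r,k)" by (cases c)
    have r: "r \<in> {1..m}" and k: "k = 1 \<or> k = 2" using c Osub rk unfolding grid_def by auto
    show "c \<in> (\<lambda>r. (r, if (r,1) \<in> Oc then 1 else (2::nat))) ` {1..m} \<union> (\<lambda>r. (r,2::nat)) ` F"
    proof (cases "k = 1")
      case True then have "c = (\<lambda>r. (r, if (r,1) \<in> Oc then 1 else (2::nat))) r" using c rk by simp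
      then show ?thesis using r by (intro UnI1 rev_image_eqI[of r])
    next
      case False
      then have k2: "k = 2" using k by simp
      show ?thesis
      proof (cases "(r,1) \<in> Oc")
        case True then have "r \<in> F" using c rk k2 r F_def by simp
        then show ?thesis using rk k2 by (intro UnI2 rev_image_eqI[of r]) simp_all
      next
        case False then have "c = (\<lambda>r. (r, if (r,1) \<in> Oc then 1 else (2::nat))) r" using rk k2 by simp
        then show ?thesis using r by (intro UnI1 rev_image_eqI[of r])
      qed
    qed
  qed
  note sub = this
  have "card Oc \<le> card ((\<lambda>r. (r, if (r,1) \<in> Oc then 1 else (2::nat))) ` {1..m}) + card ((\<lambda>r. (r,2::nat)) ` F)"
    using card_mono[OF _ sub] card_Un_le[of "(\<lambda>r. (r, if (r,1) \<in> Oc then 1 else (2::nat))) ` {1..m}" "(\<lambda>r. (r,2::nat)) ` F"]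
    by (simp add: F_def)
  also have "card ((\<lambda>r. (r, if (r,1) \<in> Oc then 1 else (2::nat))) ` {1..m}) + card ((\<lambda>r. (r,2::nat)) ` F) \<le> m + card F"
    using card_image_le[of "{1..m::nat}" "\<lambda>r. (r, if (r,1) \<in> Oc then 1 else (2::nat))"]
       card_image_le[of F "\<lambda>r. (r,2::nat)"] by (simp add: F_def)
  finally have cO: "card Oc \<le> m + card F" .
  define P where "P = (\<lambda>r e. e \<in> E2 \<and> (fst (fst e) = r \<or> fst (snd e) = r))"
  define \<phi> where "\<phi> = (\<lambda>r. if \<exists>e. P r e then Some (SOME e. P r e) else None)"
  have E1_of: "(r,c) \<in> E1" if "(r,c) \<in> Oc" "\<not> (\<exists>e. P r e)" for r c
  proof -
    have "(r,c) \<notin> halves E2"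
    proof
      assume "(r,c) \<in> halves E2"
      then have "(r,c) \<in> fst ` E2 \<or> (r,c) \<in> snd ` E2" by (simp add: halves_def)
      then obtain e where "e \<in> E2" "fst e = (r,c) \<or> snd e = (r,c)" by (metis imageE)
      then have "P r e" unfolding P_def by (metis fst_conv)
      then show False using that by blast
    qed
    then show ?thesis using that Oc_def by blast
  qed
  have nG: "\<not> has_gen_C4 E1 E2" using v unfolding valid_def by blast
  then have nC4: "\<not> has_C4 E1" unfolding has_gen_C4_def by blast
  have tok: "twoedges_ok m 2 E2" using v unfolding valid_def by blast
  have "inj_on \<phi> F"
  proof (rule inj_onI, rule ccontr)
    fix r s assume r: "r \<in> F" and s: "s \<in> F" and eq: "\<phi> r = \<phi> s" and ne: "r \<noteq> s"
    show False
    proof (cases "\<exists>e. P r e")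
      case False
      then have "\<not> (\<exists>e. P s e)" using eq unfolding \<phi>_def by (auto split: if_splits)
      then have "(r,1) \<in> E1" "(r,2) \<in> E1" "(s,1) \<in> E1" "(s,2) \<in> E1"
        using E1_of False r s F_def by auto
      then have "has_C4 E1" unfolding has_C4_def using ne by (metis one_neq_zero numeral_eq_one_iff semiring_norm(85))
      then show False using nC4 by blast
    next
      case True
      then have Ps: "\<exists>e. P s e" using eq unfolding \<phi>_def by (auto split: if_splits)
      define e where "e = (SOME e. P r e)"
      have Pre: "P r e" using True e_def by (metis someI_ex)
      have "e = (SOME e. P s e)" using eq True Ps e_def unfolding \<phi>_def by simp
      then have Pse: "P s e" using Ps by (metis someI_ex)
      obtain i j p q where e: "e = ((i,j),(p,q))" by (metis prod.collapse)
      have eE: "((i,j),(p,q)) \<in> E2" using Pre e P_def by simp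
      then have g: "(i,j) \<in> grid m 2" "(p,q) \<in> grid m 2" "i \<noteq> p" "j \<noteq> q"
        using tok unfolding twoedges_ok_def by auto
      have ip: "i \<in> F \<and> p \<in> F" using Pre Pse e ne r s unfolding P_def by auto
      have "q = 1 \<or> q = 2" "j = 1 \<or> j = 2" using g unfolding grid_def by auto
      then have "(i,q) \<in> Oc" "(p,j) \<in> Oc" using ip F_def by auto
      then have "occupied E1 E2 (i,q)" "occupied E1 E2 (p,j)" unfolding occ_iff Oc_def by auto
      then have "\<exists>i j k l. ((i,j),(k,l)) \<in> E2 \<and> occupied E1 E2 (i,l) \<and> occupied E1 E2 (k,j)"
        using eE by blast
      then have "has_gen_C4 E1 E2" unfolding has_gen_C4_def by (intro disjI2 disjI1)
      then show False using nG by blast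
    qed
  qed
  moreover have "\<phi> ` F \<subseteq> insert None (Some ` E2)"
  proof
    fix x assume "x \<in> \<phi> ` F"
    then obtain r where "x = \<phi> r" by blast
    show "x \<in> insert None (Some ` E2)"
    proof (cases "\<exists>e. P r e")
      case True
      then have "P r (SOME e. P r e)" by (rule someI_ex)
      then have "(SOME e. P r e) \<in> E2" unfolding P_def by blast
      moreover have "x = Some (SOME e. P r e)" using True \<open>x = \<phi> r\<close> unfolding \<phi>_def by simp
      ultimately show ?thesis by blast
    next
      case False
      then show ?thesis using \<open>x = \<phi> r\<close> unfolding \<phi>_def by simp
    qed
  qed
  moreover have "finite E2" using tok twoedges_sub by (metis finite_SigmaI finite_grid finite_subset)
  ultimately have "card F \<le> card (insert None (Some ` E2))"
    by (meson card_inj_on_le finite.insertI finite_imageI)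
  also have "\<dots> \<le> card E2 + 1"
    using \<open>finite E2\<close> by (simp add: card_insert_if card_image)
  finally show ?thesis using cO cardO by linarith
qed



definition tc :: "cell \<Rightarrow> cell" where "tc c = (snd c, fst c)"
definition te :: "twoedge \<Rightarrow> twoedge" where "te e = (tc (fst e), tc (snd e))"

lemma tc_simp[simp]: "tc (a,b) = (b,a)" by (simp add: tc_def)
lemma te_simp[simp]: "te ((a,b),(c,d)) = ((b,a),(d,c))" by (simp add: te_def)
lemma inj_tc: "inj tc" unfolding inj_def tc_def by (simp add: prod_eq_iff)
lemma inj_te: "inj te" unfolding inj_def te_def tc_def by (simp add: prod_eq_iff)
lemma mem_tc: "(a,b) \<in> tc ` E \<longleftrightarrow> (b,a) \<in> E"
  by (force simp: tc_def)
lemma mem_te: "((a,b),(c,d)) \<in> te ` E \<longleftrightarrow> ((b,a),(d,c)) \<in> E"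
  by (force simp: te_def tc_def)

lemma halves_te: "halves (te ` E2) = tc ` halves E2"
  unfolding halves_def te_def by (auto simp: image_image image_Un)

lemma occ_t: "occupied (tc ` E1) (te ` E2) (a,b) \<longleftrightarrow> occupied E1 E2 (b,a)"
  unfolding occupied_def halves_te by (simp add: mem_tc)

lemma dist5: "distinct [(k,l),(k,j),(k,q),(i,l),(p,l)] \<longleftrightarrow>
   (k \<noteq> i \<and> k \<noteq> (p::nat) \<and> i \<noteq> p \<and> l \<noteq> j \<and> l \<noteq> q \<and> j \<noteq> (q::nat))"
  by auto

lemma C4_t: "has_C4 (tc ` E) \<Longrightarrow> has_C4 E"
proof -
  assume "has_C4 (tc ` E)"
  then obtain i j k l where "i \<noteq> k" "j \<noteq> l" "(i,j) \<in> tc ` E" "(i,l) \<in> tc ` E" "(k,j) \<in> tc ` E" "(k,l) \<in> tc ` E"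
    unfolding has_C4_def by blast
  then have "j \<noteq> l \<and> i \<noteq> k \<and> (j,i) \<in> E \<and> (j,k) \<in> E \<and> (l,i) \<in> E \<and> (l,k) \<in> E" by (simp add: mem_tc)
  then show "has_C4 E" unfolding has_C4_def by blast
qed

lemma gen_t: "has_gen_C4 (tc ` E1) (te ` E2) \<Longrightarrow> has_gen_C4 E1 E2"
proof -
  assume h: "has_gen_C4 (tc ` E1) (te ` E2)"
  consider (a) "has_C4 (tc ` E1)"
    | (b) "\<exists>i j k l. ((i,j),(k,l)) \<in> te ` E2 \<and> occupied (tc ` E1) (te ` E2) (i,l) \<and> occupied (tc ` E1) (te ` E2) (k,j)"
    | (c) "\<exists>i j p q k l. ((i,j),(p,q)) \<in> te ` E2 \<and>
        distinct [(k,l),(k,j),(k,q),(i,l),(p,l)] \<and>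
        occupied (tc ` E1) (te ` E2) (k,l) \<and> occupied (tc ` E1) (te ` E2) (k,j) \<and> occupied (tc ` E1) (te ` E2) (k,q) \<and>
        occupied (tc ` E1) (te ` E2) (i,l) \<and> occupied (tc ` E1) (te ` E2) (p,l)"
    using h unfolding has_gen_C4_def by blast
  then show ?thesis
  proof cases
    case a then show ?thesis using C4_t unfolding has_gen_C4_def by blast
  next
    case b
    then obtain i j k l where "((i,j),(k,l)) \<in> te ` E2" "occupied (tc ` E1) (te ` E2) (i,l)" "occupied (tc ` E1) (te ` E2) (k,j)"
      by blast
    then have "((j,i),(l,k)) \<in> E2 \<and> occupied E1 E2 (j,k) \<and> occupied E1 E2 (l,i)"
      by (simp add: mem_te occ_t)
    then have "\<exists>i j k l. ((i,j),(k,l)) \<in> E2 \<and> occupied E1 E2 (i,l) \<and> occupied E1 E2 (k,j)" by blast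
    then show ?thesis unfolding has_gen_C4_def by (intro disjI2 disjI1)
  next
    case c
    then obtain i j p q k l where "((i,j),(p,q)) \<in> te ` E2" "distinct [(k,l),(k,j),(k,q),(i,l),(p,l)]"
       "occupied (tc ` E1) (te ` E2) (k,l)" "occupied (tc ` E1) (te ` E2) (k,j)" "occupied (tc ` E1) (te ` E2) (k,q)"
       "occupied (tc ` E1) (te ` E2) (i,l)" "occupied (tc ` E1) (te ` E2) (p,l)"
      by blast
    then have "((j,i),(q,p)) \<in> E2 \<and> distinct [(l,k),(l,i),(l,p),(j,k),(q,k)] \<and>
       occupied E1 E2 (l,k) \<and> occupied E1 E2 (l,i) \<and> occupied E1 E2 (l,p) \<and>
       occupied E1 E2 (j,k) \<and> occupied E1 E2 (q,k)"
      by (simp only: mem_te occ_t dist5) blast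
    then have "\<exists>i j p q k l. ((i,j),(p,q)) \<in> E2 \<and>
        distinct [(k,l),(k,j),(k,q),(i,l),(p,l)] \<and>
        occupied E1 E2 (k,l) \<and> occupied E1 E2 (k,j) \<and> occupied E1 E2 (k,q) \<and>
        occupied E1 E2 (i,l) \<and> occupied E1 E2 (p,l)" by blast
    then show ?thesis unfolding has_gen_C4_def by (intro disjI2)
  qed
qed

lemma grid_t: "c \<in> grid m n \<Longrightarrow> tc c \<in> grid n m"
  by (cases c) (simp add: grid_def)

lemma valid_t:
  assumes v: "valid m n E1 E2"
  shows "valid n m (tc ` E1) (te ` E2)"
proof -
  have a: "tc ` E1 \<subseteq> grid n m" using v grid_t unfolding valid_def by blast
  have b: "twoedges_ok n m (te ` E2)"
    unfolding twoedges_ok_def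
  proof (intro ballI)
    fix x assume "x \<in> te ` E2"
    then obtain i j k l where x: "x = ((j,i),(l,k))" and xe: "((i,j),(k,l)) \<in> E2"
      by (metis imageE prod.collapse te_simp)
    have "(i,j) \<in> grid m n \<and> (k,l) \<in> grid m n \<and> i \<noteq> k \<and> j \<noteq> l"
      using v xe unfolding valid_def twoedges_ok_def by fast
    then show "case x of (x1, x2) \<Rightarrow> (case x1 of (i, j) \<Rightarrow> \<lambda>(k, l). (i, j) \<in> grid n m \<and> (k, l) \<in> grid n m \<and> i \<noteq> k \<and> j \<noteq> l) x2"
      using x grid_t by force
  qed
  have sc: "simple_conf E1 E2" using v unfolding valid_def by blast
  have c: "simple_conf (tc ` E1) (te ` E2)"
    unfolding simple_conf_def
  proof (intro conjI ballI impI)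
    fix e e' assume "e \<in> te ` E2" "e' \<in> te ` E2" "e \<noteq> e'"
    then obtain d d' where "d \<in> E2" "d' \<in> E2" "d \<noteq> d'" "e = te d" "e' = te d'" by blast
    then have "{fst d, snd d} \<inter> {fst d', snd d'} = {}" using sc unfolding simple_conf_def by blast
    then show "{fst e, snd e} \<inter> {fst e', snd e'} = {}" using \<open>e = te d\<close> \<open>e' = te d'\<close>
      unfolding te_def using inj_tc by (auto simp: inj_eq)
  next
    fix e assume "e \<in> te ` E2"
    then obtain d where "d \<in> E2" "e = te d" by blast
    then have "fst d \<noteq> snd d" using sc unfolding simple_conf_def by blast
    then show "fst e \<noteq> snd e" using \<open>e = te d\<close> unfolding te_def using inj_tc by (auto simp: inj_eq)
  next
    have "halves E2 \<inter> E1 = {}" using sc unfolding simple_conf_def by blast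
    then show "halves (te ` E2) \<inter> tc ` E1 = {}" unfolding halves_te using inj_tc
      by (metis image_Int image_empty)
  qed
  have d: "\<not> has_gen_C4 (tc ` E1) (te ` E2)" using v gen_t unfolding valid_def by blast
  show ?thesis using a b c d unfolding valid_def by blast
qed

lemma z2_t_le: "z2 m n \<le> z2 n m"
proof (rule z2_le)
  fix E1 E2 assume v: "valid m n E1 E2"
  have "card (tc ` E1) + card (te ` E2) \<le> z2 n m" using z2_ge[OF valid_t[OF v]] .
  moreover have "card (tc ` E1) = card E1" using inj_tc by (simp add: card_image inj_on_def inj_eq)
  moreover have "card (te ` E2) = card E2" using inj_te by (simp add: card_image inj_on_def inj_eq)
  ultimately show "card E1 + card E2 \<le> z2 n m" by simp
qed

lemma z2_sym: "z2 m n = z2 n m"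
  using z2_t_le[of m n] z2_t_le[of n m] by simp



lemma gen_empty: "has_gen_C4 E1 {} \<longleftrightarrow> has_C4 E1"
  unfolding has_gen_C4_def by simp

lemma valid_E1: "E1 \<subseteq> grid m n \<Longrightarrow> \<not> has_C4 E1 \<Longrightarrow> valid m n E1 {}"
  unfolding valid_def gen_empty by (simp add: twoedges_ok_def simple_conf_def halves_def)

lemma col2_lower:
  assumes "m \<ge> 2"
  shows "m + 1 \<le> z2 m 2"
proof -
  define E1 where "E1 = insert (1,2) ((\<lambda>r. (r,1::nat)) ` {1..m})"
  have sub: "E1 \<subseteq> grid m 2" using assms unfolding E1_def grid_def by auto
  have nc: "\<not> has_C4 E1"
  proof
    assume "has_C4 E1"
    then obtain i j k l where h: "i \<noteq> k" "j \<noteq> l" "(i,j) \<in> E1" "(i,l) \<in> E1" "(k,j) \<in> E1" "(k,l) \<in> E1"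
      unfolding has_C4_def by blast
    have cols: "\<And>a b. (a,b) \<in> E1 \<Longrightarrow> b = 1 \<or> (a = 1 \<and> b = 2)" unfolding E1_def by auto
    show False using cols[OF h(3)] cols[OF h(4)] cols[OF h(5)] cols[OF h(6)] h(1,2) by auto
  qed
  have "card E1 = m + 1"
  proof -
    have "card ((\<lambda>r. (r,1::nat)) ` {1..m}) = m" by (simp add: card_image inj_on_def)
    moreover have "(1,2) \<notin> (\<lambda>r. (r,1::nat)) ` {1..m}" by auto
    ultimately show ?thesis unfolding E1_def by simp
  qed
  then show ?thesis using z2_ge[OF valid_E1[OF sub nc]] by simp
qed

lemma col2: "m \<ge> 2 \<Longrightarrow> z2 m 2 = m + 1"
  using col2_lower[of m] z2_le[of m 2 "m+1"] col2_upper by (simp add: le_antisym)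

lemma row2: "n \<ge> 2 \<Longrightarrow> z2 2 n = n + 1"
  using col2[of n] z2_sym[of 2 n] by simp



definition row :: "cell set \<Rightarrow> nat \<Rightarrow> nat set" where "row E r = {c. (r,c) \<in> E}"

lemma row_sub: "E \<subseteq> grid m n \<Longrightarrow> row E r \<subseteq> {1..n}"
  unfolding row_def grid_def by auto

lemma row_int:
  assumes "\<not> has_C4 E" "r \<noteq> s" "finite (row E r)"
  shows "card (row E r \<inter> row E s) \<le> 1"
proof (rule ccontr)
  assume "\<not> card (row E r \<inter> row E s) \<le> 1"
  moreover have "finite (row E r \<inter> row E s)" using assms(3) by simp
  ultimately obtain a b where "a \<in> row E r \<inter> row E s" "b \<in> row E r \<inter> row E s" "a \<noteq> b"
    using card_le_Suc0_iff_eq by (metis One_nat_def)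
  then have "has_C4 E" unfolding has_C4_def row_def using assms(2) by blast
  then show False using assms(1) by blast
qed

lemma row_pair:
  assumes "E \<subseteq> grid m n" "\<not> has_C4 E" "r \<noteq> s"
  shows "card (row E r) + card (row E s) \<le> n + 1"
proof -
  have f: "finite (row E r)" "finite (row E s)" using row_sub[OF assms(1)] finite_subset by blast+
  have "card (row E r) + card (row E s) = card (row E r \<union> row E s) + card (row E r \<inter> row E s)"
    using card_Un_Int[OF f] .
  moreover have "card (row E r \<union> row E s) \<le> n"
    using card_mono[of "{1..n}" "row E r \<union> row E s"] row_sub[OF assms(1)] by simp
  moreover have "card (row E r \<inter> row E s) \<le> 1" using row_int[OF assms(2,3) f(1)] .
  ultimately show ?thesis by linarith
qed

lemma card_rows:
  assumes "E \<subseteq> grid m n"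
  shows "card E = (\<Sum>r\<in>{1..m}. card (row E r))"
proof -
  have "E = Sigma {1..m} (row E)" using assms unfolding row_def grid_def by auto
  moreover have "\<forall>r\<in>{1..m}. finite (row E r)" using row_sub[OF assms] finite_subset by blast
  ultimately show ?thesis by (metis card_SigmaI finite_atLeastAtMost)
qed

lemma sum3: "(\<Sum>r\<in>{1..3::nat}. f r) = f 1 + f 2 + (f 3 :: nat)"
proof -
  have "{1..3::nat} = {1,2,3}" by auto
  then show ?thesis by simp
qed

lemma sum4: "(\<Sum>r\<in>{1..4::nat}. f r) = f 1 + f 2 + f 3 + (f 4 :: nat)"
proof -
  have "{1..4::nat} = {1,2,3,4}" by auto
  then show ?thesis by simp
qed

lemma z33_E1: "E \<subseteq> grid 3 3 \<Longrightarrow> \<not> has_C4 E \<Longrightarrow> card E \<le> 6"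
  using card_rows[of E 3 3] sum3[of "\<lambda>r. card (row E r)"]
    row_pair[of E 3 3 1 2] row_pair[of E 3 3 1 3] row_pair[of E 3 3 2 3] by simp

lemma two_sub: "A \<subseteq> {1..3::nat} \<Longrightarrow> card A = 2 \<Longrightarrow> A = {1,2} \<or> A = {1,3} \<or> A = {2,3}"
proof -
  assume a: "A \<subseteq> {1..3}" "card A = 2"
  then obtain x y where "A = {x,y}" "x \<noteq> y" by (meson card_2_iff)
  moreover have "x \<in> {1..3}" "y \<in> {1..3}" using a calculation by auto
  ultimately show ?thesis by auto
qed

lemma z43_E1:
  assumes "E \<subseteq> grid 4 3" "\<not> has_C4 E"
  shows "card E \<le> 7"
proof (rule ccontr)
  assume "\<not> card E \<le> 7"
  then have "card E \<ge> 8" by simp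
  then have s: "card (row E 1) + card (row E 2) + card (row E 3) + card (row E 4) \<ge> 8"
    using card_rows[OF assms(1)] sum4[of "\<lambda>r. card (row E r)"] by simp
  have p: "card (row E a) + card (row E b) \<le> 4" if "a \<noteq> b" for a b
    using row_pair[OF assms that] by simp
  have c2: "card (row E 1) = 2" "card (row E 2) = 2" "card (row E 3) = 2" "card (row E 4) = 2"
    using s p[of 1 2] p[of 1 3] p[of 1 4] p[of 2 3] p[of 2 4] p[of 3 4] by simp_all
  have ne: "row E a \<noteq> row E b" if "a \<noteq> b" "card (row E a) = 2" for a b
  proof
    assume "row E a = row E b"
    moreover have "finite (row E a)" using row_sub[OF assms(1)] finite_subset by blast
    ultimately show False using row_int[OF assms(2) that(1)] that(2) by simp
  qed
  have o: "row E a = {1,2} \<or> row E a = {1,3} \<or> row E a = {2,3}" if "card (row E a) = 2" for a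
    using two_sub[OF row_sub[OF assms(1)] that] .
  define A where "A = {row E 1, row E 2, row E 3, row E 4}"
  have "A \<subseteq> {{1,2},{1,3},{2,3}}" unfolding A_def using o c2 by blast
  moreover have "card {{1,2},{1,3},{2,3::nat}} \<le> 3" by (simp add: card_insert_if)
  ultimately have "card A \<le> 3" using card_mono[of "{{1,2},{1,3},{2,3::nat}}" A] by simp
  moreover have "card A = 4" unfolding A_def
    using ne[of 1 2] ne[of 1 3] ne[of 1 4] ne[of 2 3] ne[of 2 4] ne[of 3 4] c2 by (simp add: card_insert_if)
  ultimately show False by simp
qed



lemma ex3: "\<exists>x::nat. x \<in> {1..3} \<and> x \<noteq> a \<and> x \<noteq> b"
proof -
  have "\<exists>x::nat. 1 \<le> x \<and> x \<le> 3 \<and> x \<noteq> a \<and> x \<noteq> b" by presburger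
  then show ?thesis by auto
qed

lemma c4_three:
  assumes "grid 3 3 - {(i,j),(k,l),(i,l)} \<subseteq> E" "i \<noteq> k" "j \<noteq> l" "k \<in> {1..3}" "j \<in> {1..3}"
  shows "has_C4 E"
proof -
  obtain r where r: "r \<in> {1..3}" "r \<noteq> i" "r \<noteq> k" using ex3 by blast
  obtain c where c: "c \<in> {1..3}" "c \<noteq> j" "c \<noteq> l" using ex3 by blast
  have "(k,j) \<in> E" "(k,c) \<in> E" "(r,j) \<in> E" "(r,c) \<in> E"
    using assms r c unfolding grid_def by auto
  then show ?thesis unfolding has_C4_def using r c by blast
qed


lemma card_grid: "card (grid m n) = m * n"
  unfolding grid_def by (simp add: card_cartesian_product)

lemma z33_upper:
  assumes v: "valid 3 3 E1 E2"
  shows "card E1 + card E2 \<le> 6"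
proof (rule ccontr)
  assume "\<not> card E1 + card E2 \<le> 6"
  then have big: "card E1 + card E2 \<ge> 7" by simp
  define Oc where "Oc = E1 \<union> halves E2"
  have Osub: "Oc \<subseteq> grid 3 3" using occ_sub[OF v] Oc_def by simp
  have cardO: "card Oc = card E1 + 2 * card E2" using occ_card[OF v] Oc_def by simp
  have E1sub: "E1 \<subseteq> grid 3 3" using v unfolding valid_def by blast
  have nG: "\<not> has_gen_C4 E1 E2" using v unfolding valid_def by blast
  then have nC4: "\<not> has_C4 E1" unfolding has_gen_C4_def by blast
  have tok: "twoedges_ok 3 3 E2" using v unfolding valid_def by blast
  have sc: "simple_conf E1 E2" using v unfolding valid_def by blast
  have fE2: "finite E2" using tok twoedges_sub by (metis finite_SigmaI finite_grid finite_subset)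
  show False
  proof (cases "E2 = {}")
    case True
    then show False using big z33_E1[OF E1sub nC4] by simp
  next
    case False
    then obtain e where eE: "e \<in> E2" by blast
    obtain i j k l where e: "e = ((i,j),(k,l))" by (metis prod.collapse)
    have g: "(i,j) \<in> grid 3 3" "(k,l) \<in> grid 3 3" "i \<noteq> k" "j \<noteq> l"
      using tok eE e unfolding twoedges_ok_def by auto
    have "\<not> (occupied E1 E2 (i,l) \<and> occupied E1 E2 (k,j))"
    proof
      assume "occupied E1 E2 (i,l) \<and> occupied E1 E2 (k,j)"
      then have "\<exists>i j k l. ((i,j),(k,l)) \<in> E2 \<and> occupied E1 E2 (i,l) \<and> occupied E1 E2 (k,j)"
        using eE e by blast
      then have "has_gen_C4 E1 E2" unfolding has_gen_C4_def by (intro disjI2 disjI1)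
      then show False using nG by blast
    qed
    then obtain u where u: "u = (i,l) \<or> u = (k,j)" "u \<notin> Oc" unfolding occ_iff Oc_def by blast
    have ug: "u \<in> grid 3 3" using u(1) g unfolding grid_def by auto
    have "Oc \<subseteq> grid 3 3 - {u}" using Osub u(2) by blast
    moreover have cg: "card (grid 3 3 - {u}) = 8" using ug by (simp add: card_grid)
    ultimately have "card Oc \<le> 8" using card_mono[of "grid 3 3 - {u}" Oc] by simp
    then have "card E2 \<le> 1" using cardO big by simp
    moreover have "card E2 \<noteq> 0" using False fE2 by simp
    ultimately have c1: "card E2 = 1" by simp
    then obtain e' where "E2 = {e'}" by (rule card_1_singletonE)
    then have E2e: "E2 = {e}" using eE by simp
    have "card Oc = card (grid 3 3 - {u})" using cardO big c1 cg \<open>card Oc \<le> 8\<close> by simp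
    then have Oeq: "Oc = grid 3 3 - {u}"
      using card_subset_eq[of "grid 3 3 - {u}" Oc] \<open>Oc \<subseteq> grid 3 3 - {u}\<close> by simp
    have hE: "halves E2 = {(i,j),(k,l)}" unfolding E2e e halves_def by (simp add: insert_commute)
    have sub: "grid 3 3 - {u, (i,j), (k,l)} \<subseteq> E1"
      using Oeq unfolding Oc_def hE by blast
    have gi: "i \<in> {1..3}" "k \<in> {1..3}" "j \<in> {1..3}" "l \<in> {1..3}" using g unfolding grid_def by auto
    have "has_C4 E1"
    proof (cases "u = (i,l)")
      case True
      have "grid 3 3 - {(i,j),(k,l),(i,l)} \<subseteq> E1" using sub True by (simp add: insert_commute)
      then show ?thesis using c4_three g gi by blast
    next
      case False
      then have "u = (k,j)" using u(1) by blast
      then have "grid 3 3 - {(k,l),(i,j),(k,j)} \<subseteq> E1" using sub by (simp add: insert_commute)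
      then show ?thesis using c4_three[of k l i j E1] g gi by auto
    qed
    then show False using nC4 by blast
  qed
qed



lemma z33_lower: "6 \<le> z2 3 3"
proof -
  define D :: "cell set" where "D = (\<lambda>a. (a,a)) ` {1..3}"
  define E1 :: "cell set" where "E1 = grid 3 3 - D"
  have mem: "(a,b) \<in> E1 \<longleftrightarrow> a \<in> {1..3} \<and> b \<in> {1..3} \<and> a \<noteq> b" for a b
    unfolding E1_def D_def grid_def by auto
  have sub: "E1 \<subseteq> grid 3 3" unfolding E1_def by blast
  have nc: "\<not> has_C4 E1"
  proof
    assume "has_C4 E1"
    then obtain i j k l where "i \<noteq> k" "j \<noteq> l" "(i,j) \<in> E1" "(i,l) \<in> E1" "(k,j) \<in> E1" "(k,l) \<in> E1"
      unfolding has_C4_def by blast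
    then show False unfolding mem by auto
  qed
  have "card D = 3" unfolding D_def by (simp add: card_image inj_on_def)
  moreover have "D \<subseteq> grid 3 3" unfolding D_def grid_def by auto
  moreover have "finite D" unfolding D_def by simp
  ultimately have "card E1 = 6" unfolding E1_def using card_Diff_subset[of D "grid 3 3"] card_grid[of 3 3] by simp
  then show ?thesis using z2_ge[OF valid_E1[OF sub nc]] by simp
qed

lemma z43_lower: "8 \<le> z2 4 3"
proof -
  define E1 :: "cell set" where "E1 = {(1,2),(1,3),(2,1),(2,3),(3,1),(3,2),(4,2)}"
  define E2 :: "twoedge set" where "E2 = {((3,3),(4,1))}"
  have hE: "halves E2 = {(3,3),(4,1)}" unfolding E2_def halves_def by (simp add: insert_commute)
  have occ: "occupied E1 E2 c \<longleftrightarrow> c \<in> {(1,2),(1,3),(2,1),(2,3),(3,1),(3,2),(4,2),(3,3),(4,1)}" for c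
    unfolding occupied_def hE E1_def by auto
  have sub: "E1 \<subseteq> grid 4 3" unfolding E1_def grid_def by auto
  have tok: "twoedges_ok 4 3 E2" unfolding E2_def twoedges_ok_def grid_def by simp
  have sc: "simple_conf E1 E2" unfolding simple_conf_def hE unfolding E2_def E1_def by simp
  have nc: "\<not> has_C4 E1"
  proof
    assume "has_C4 E1"
    then obtain i j k l where h: "i \<noteq> k" "j \<noteq> l" "(i,j) \<in> E1" "(i,l) \<in> E1" "(k,j) \<in> E1" "(k,l) \<in> E1"
      unfolding has_C4_def by blast
    have mem: "(a,b) \<in> E1 \<Longrightarrow> (1 \<le> a \<and> a \<le> 3 \<and> 1 \<le> b \<and> b \<le> 3 \<and> a \<noteq> b) \<or> (a = 4 \<and> b = 2)" for a b
      unfolding E1_def by auto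
    have "i \<noteq> 4" using mem[OF h(3)] mem[OF h(4)] h(2) by auto
    moreover have "k \<noteq> 4" using mem[OF h(5)] mem[OF h(6)] h(2) by auto
    ultimately show False using mem[OF h(3)] mem[OF h(4)] mem[OF h(5)] mem[OF h(6)] h(1,2) by linarith
  qed
  have n2: "\<not> (\<exists>i j k l. ((i,j),(k,l)) \<in> E2 \<and> occupied E1 E2 (i,l) \<and> occupied E1 E2 (k,j))"
    unfolding occ unfolding E2_def by simp
  have n3: "\<not> (\<exists>i j p q k l. ((i,j),(p,q)) \<in> E2 \<and>
        distinct [(k,l),(k,j),(k,q),(i,l),(p,l)] \<and>
        occupied E1 E2 (k,l) \<and> occupied E1 E2 (k,j) \<and> occupied E1 E2 (k,q) \<and>
        occupied E1 E2 (i,l) \<and> occupied E1 E2 (p,l))"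
  proof
    assume "\<exists>i j p q k l. ((i,j),(p,q)) \<in> E2 \<and>
        distinct [(k,l),(k,j),(k,q),(i,l),(p,l)] \<and>
        occupied E1 E2 (k,l) \<and> occupied E1 E2 (k,j) \<and> occupied E1 E2 (k,q) \<and>
        occupied E1 E2 (i,l) \<and> occupied E1 E2 (p,l)"
    then obtain k l where "distinct [(k,l),(k,3),(k,1),(3,l),(4::nat,l::nat)]"
       "occupied E1 E2 (k,l)" "occupied E1 E2 (k,3)" "occupied E1 E2 (k,1)"
      unfolding E2_def by blast
    then show False unfolding occ dist5 by auto
  qed
  have v: "valid 4 3 E1 E2" unfolding valid_def has_gen_C4_def using sub tok sc nc n2 n3 by blast
  have "card E1 = 7" unfolding E1_def by simp
  moreover have "card E2 = 1" unfolding E2_def by simp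
  ultimately show ?thesis using z2_ge[OF v] by simp
qed


theorem theorem2p3:
  shows "(\<forall>m::nat. m \<ge> 2 \<longrightarrow> z2 m 2 = m + 1) \<and>
         (\<forall>n::nat. n \<ge> 2 \<longrightarrow> z2 2 n = n + 1) \<and>
         z2 3 3 = 6 \<and>
         z2 4 3 \<ge> 8 \<and> 8 > zaran 4 3"
proof (intro conjI allI impI)
  fix m :: nat assume "m \<ge> 2" then show "z2 m 2 = m + 1" by (rule col2)
next
  fix n :: nat assume "n \<ge> 2" then show "z2 2 n = n + 1" by (rule row2)
next
  have "z2 3 3 \<le> 6" by (rule z2_le) (rule z33_upper)
  then show "z2 3 3 = 6" using z33_lower by simp
next
  show "z2 4 3 \<ge> 8" by (rule z43_lower)
next
  have "zaran 4 3 \<le> 7" by (rule zaran_le) (rule z43_E1)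
  then show "8 > zaran 4 3" by simp
qed

end
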